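(* Let $n\ge2$ and let $f:\mathbb R^n\to\mathbb R^n$ be a continuous injective map such that $\overline{f(A^\circ)}=\big(\overline{f(A)}\big)^\circ$ for every $A\in\mathcal K_0^n$. Then $f$ is an orthogonal linear map.
   Context: $\mathcal K_0^n$: closed convex subsets of $\mathbb R^n$ containing $0$. Polar: $A^\circ=\{x:\sup_{a\in A}\langle a,x\rangle\le1\}$. $f(A)=\{f(a):a\in A\}$ and the bar denotes topological closure in $\mathbb R^n$. *)

theory Defs
  imports "HOL-Analysis.Analysis"
begin

text \<open>Polar of a set: the set of x with sup over a in A of a.x at most 1.
  Written pointwise (equivalent to the sup formulation, also for empty A).\<close>
definition polar :: "('a::real_inner) set \<Rightarrow> 'a set" where
  "polar A = {x. \<forall>a\<in>A. inner a x \<le> 1}"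

definition K0 :: "('a::real_normed_vector) set set" where
  "K0 = {A. closed A \<and> convex A \<and> 0 \<in> A}"

end

theory Submission
  imports Defs "HOL-Homology.Invariance_of_Domain"
begin


lemma zero_in_polar: "0 \<in> polar A" by (simp add: polar_def)

lemma convex_polar: "convex (polar A)"
  unfolding polar_def convex_def by (auto simp: inner_add_right) 
    (smt (verit) mult_left_le mult_nonneg_nonneg)

lemma polar_UNIV: "polar (UNIV::'a::real_inner set) = {0}"
proof -
  { fix x :: 'a assume x: "x \<in> polar UNIV" "x \<noteq> 0"
    have "((2 / (x \<bullet> x)) *\<^sub>R x) \<bullet> x \<le> 1" using x(1) unfolding polar_def by blast
    moreover have "x \<bullet> x > 0" using x(2) by simp
    ultimately have False by simp }
  then show ?thesis using zero_in_polar by blast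
qed

lemma polar_seg: "polar (closed_segment 0 a) = {x. a \<bullet> x \<le> 1}"
proof -
  have "(\<forall>b\<in>closed_segment 0 a. b \<bullet> x \<le> 1) \<longleftrightarrow> a \<bullet> x \<le> 1" for x
  proof
    assume "\<forall>b\<in>closed_segment 0 a. b \<bullet> x \<le> 1" then show "a \<bullet> x \<le> 1" by auto
  next
    assume h: "a \<bullet> x \<le> 1"
    show "\<forall>b\<in>closed_segment 0 a. b \<bullet> x \<le> 1"
    proof
      fix b assume "b \<in> closed_segment 0 a"
      then obtain u where u: "0 \<le> u" "u \<le> 1" "b = u *\<^sub>R a" by (auto simp: closed_segment_def)
      have "u * (a \<bullet> x) \<le> 1" using u h
        by (smt (verit) mult_left_le mult_nonneg_nonpos mult_le_one mult_nonneg_nonneg)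
      then show "b \<bullet> x \<le> 1" using u by simp
    qed
  qed
  then show ?thesis by (auto simp: polar_def)
qed

lemma polar_half: 
  fixes a :: "'a::real_inner"
  shows "polar {x. a \<bullet> x \<le> 1} = closed_segment 0 a"
proof
  show "closed_segment 0 a \<subseteq> polar {x. a \<bullet> x \<le> 1}"
  proof
    fix b assume "b \<in> closed_segment 0 a"
    then obtain u where u: "0 \<le> u" "u \<le> 1" "b = u *\<^sub>R a" by (auto simp: closed_segment_def)
    { fix x assume h: "a \<bullet> x \<le> 1"
      have "u * (a \<bullet> x) \<le> 1" using u h
        by (smt (verit) mult_left_le mult_nonneg_nonpos mult_le_one mult_nonneg_nonneg) }
    then show "b \<in> polar {x. a \<bullet> x \<le> 1}" using u by (auto simp: polar_def inner_commute)
  qed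
next
  show "polar {x. a \<bullet> x \<le> 1} \<subseteq> closed_segment 0 a"
  proof
    fix z assume z: "z \<in> polar {x. a \<bullet> x \<le> 1}"
    then have zx: "\<And>x. a \<bullet> x \<le> 1 \<Longrightarrow> x \<bullet> z \<le> 1" by (auto simp: polar_def inner_commute)
    show "z \<in> closed_segment 0 a"
    proof (cases "a = 0")
      case True
      then have "z \<in> polar UNIV" using zx by (auto simp: polar_def inner_commute)
      then show ?thesis using True polar_UNIV by auto
    next
      case False
      then have aa: "a \<bullet> a > 0" by simp
      define l where "l = (z \<bullet> a) / (a \<bullet> a)"
      define w where "w = z - l *\<^sub>R a"
      have wa: "a \<bullet> w = 0" using aa by (simp add: w_def l_def inner_diff_right inner_commute)
      have wz: "w \<bullet> z = w \<bullet> w" using wa by (simp add: w_def inner_diff_left inner_diff_right inner_commute algebra_simps)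
      have "w = 0"
      proof (rule ccontr)
        assume "w \<noteq> 0"
        then have ww: "w \<bullet> w > 0" by simp
        have "a \<bullet> ((2 / (w \<bullet> w)) *\<^sub>R w) \<le> 1" using wa by simp
        from zx[OF this] have "(2 / (w \<bullet> w)) * (w \<bullet> z) \<le> 1" by simp
        then show False using ww wz by simp
      qed
      then have zl: "z = l *\<^sub>R a" by (simp add: w_def)
      have "a \<bullet> ((1 / (a \<bullet> a)) *\<^sub>R a) \<le> 1" using aa by simp
      from zx[OF this] have l1: "l \<le> 1" using aa by (simp add: zl)
      have l0: "0 \<le> l"
      proof (rule ccontr)
        assume "\<not> 0 \<le> l"
        then have ln: "l < 0" by simp
        have "a \<bullet> ((2 / (l * (a \<bullet> a))) *\<^sub>R a) \<le> 1" using aa ln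
          by (simp add: divide_neg_pos mult_neg_pos less_imp_le order_trans[of _ 0])
        from zx[OF this] have "(2::real) \<le> 1" using aa ln by (simp add: zl)
        then show False by simp
      qed
      show ?thesis using l0 l1 zl by (auto simp: closed_segment_def)
    qed
  qed
qed



lemma seg_K0: "closed_segment 0 a \<in> K0"
  by (simp add: K0_def)
lemma half_K0: "{x. a \<bullet> x \<le> (1::real)} \<in> K0"
  by (simp add: K0_def closed_halfspace_le convex_halfspace_le)

locale P54 =
  fixes f :: "'a::euclidean_space \<Rightarrow> 'a"
  assumes cont: "continuous_on UNIV f" and inj: "inj f"
    and hyp: "\<forall>A\<in>K0. closure (f ` polar A) = polar (closure (f ` A))"
begin

lemma f0: "f 0 = 0"
proof -
  have "(UNIV::'a set) \<in> K0" by (simp add: K0_def)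
  from hyp[rule_format, OF this]
  have "closure (f ` polar UNIV) = polar (closure (range f))" .
  moreover have "closure (f ` polar UNIV) = {f 0}" by (simp add: polar_UNIV)
  ultimately have "{f 0} = polar (closure (range f))" by simp
  then show ?thesis using zero_in_polar by (metis singletonD)
qed

lemma fseg_closed: "closure (f ` closed_segment 0 a) = f ` closed_segment 0 a"
  by (meson closure_closed compact_imp_closed compact_continuous_image continuous_on_subset cont
      compact_segment subset_UNIV)

lemma fseg_convex: "convex (f ` closed_segment 0 a)"
proof -
  from hyp[rule_format, OF half_K0[of a]]
  have "f ` closed_segment 0 a = polar (closure (f ` {x. a \<bullet> x \<le> 1}))"
    by (simp add: polar_half fseg_closed)
  then show ?thesis by (simp add: convex_polar)
qed

lemma cont_at: "isCont f x"
  using cont by (simp add: continuous_on_eq_continuous_at)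

lemma fseg: "f ` closed_segment 0 a = closed_segment 0 (f a)"
proof
  show "closed_segment 0 (f a) \<subseteq> f ` closed_segment 0 a"
  proof (rule closed_segment_subset)
    show "0 \<in> f ` closed_segment 0 a" using f0 by (metis ends_in_segment(1) image_eqI)
    show "f a \<in> f ` closed_segment 0 a" by simp
  qed (rule fseg_convex)
  show "f ` closed_segment 0 a \<subseteq> closed_segment 0 (f a)"
  proof (cases "a = 0")
    case True then show ?thesis by (simp add: f0)
  next
    case False
    define h where "h t = f (t *\<^sub>R a)" for t :: real
    have hc: "continuous_on {0..1} h" unfolding h_def
      by (intro continuous_on_compose2[OF cont]) (auto intro!: continuous_intros)
    have hinj: "inj_on h {0..1}" unfolding h_def inj_on_def
    proof (intro ballI impI)
      fix t s :: real assume "f (t *\<^sub>R a) = f (s *\<^sub>R a)"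
      then have "t *\<^sub>R a = s *\<^sub>R a" by (rule injD[OF inj])
      then show "t = s" using False by simp
    qed
    have img: "h ` {0..1} = f ` closed_segment 0 a"
      by (simp add: h_def closed_segment_image_interval image_image)
    define g where "g = inv_into {0..1} h"
    have gc: "continuous_on (h ` {0..1}) g" unfolding g_def
      by (rule continuous_on_inv[OF hc]) (use hinj in auto)
    let ?S = "closed_segment 0 (f a)"
    have Ssub: "?S \<subseteq> h ` {0..1}"
      using \<open>closed_segment 0 (f a) \<subseteq> f ` closed_segment 0 a\<close> img by simp
    have conn: "connected (g ` ?S)"
      by (rule connected_continuous_image[OF continuous_on_subset[OF gc Ssub]]) simp
    have h0: "h 0 = 0" by (simp add: h_def f0)
    have h1: "h 1 = f a" by (simp add: h_def)
    have "g 0 = 0" unfolding g_def using hinj h0 by (metis atLeastAtMost_iff inv_into_f_f order_refl zero_le_one)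
    moreover have "g (f a) = 1" unfolding g_def using hinj h1 by (metis atLeastAtMost_iff inv_into_f_f order_refl zero_le_one)
    moreover have "0 \<in> ?S" "f a \<in> ?S" by simp_all
    ultimately have "0 \<in> g ` ?S" "1 \<in> g ` ?S" by (metis image_eqI)+
    then have Icc: "{0..1} \<subseteq> g ` ?S" using conn connected_contains_Icc by blast
    show ?thesis
    proof
      fix y assume "y \<in> f ` closed_segment 0 a"
      then have "y \<in> h ` {0..1}" using img by simp
      then obtain t where t: "t \<in> {0..1}" "y = h t" by blast
      then obtain s where s: "s \<in> ?S" "t = g s" using Icc by blast
      have "h (g s) = s" unfolding g_def using Ssub s(1) by (meson f_inv_into_f subsetD)
      then show "y \<in> ?S" using s t by simp
    qed
  qed
qed

lemma clH: "closure (f ` {x. a \<bullet> x \<le> 1}) = {y. f a \<bullet> y \<le> 1}"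
proof -
  from hyp[rule_format, OF seg_K0[of a]]
  show ?thesis by (simp only: polar_seg fseg_closed fseg closure_closed closed_segment)
qed

lemma R: "a \<bullet> x \<le> 1 \<longleftrightarrow> f a \<bullet> f x \<le> 1"
proof
  assume "a \<bullet> x \<le> 1"
  then have "f x \<in> closure (f ` {x. a \<bullet> x \<le> 1})" by (auto intro: closure_subset[THEN subsetD])
  then show "f a \<bullet> f x \<le> 1" by (simp add: clH)
next
  assume fx: "f a \<bullet> f x \<le> 1"
  show "a \<bullet> x \<le> 1"
  proof (rule ccontr)
    assume "\<not> a \<bullet> x \<le> 1"
    let ?U = "f ` {y. a \<bullet> y > 1}"
    have c1: "continuous_on {y. a \<bullet> y > 1} f" using continuous_on_subset[OF cont] by blast
    have i1: "inj_on f {y. a \<bullet> y > 1}" using inj_on_subset[OF inj] by blast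
    have o1: "open {y. a \<bullet> y > 1}" by (simp add: open_halfspace_gt)
    have "open ?U" by (rule invariance_of_domain[OF c1 o1 i1])
    moreover have "?U \<inter> f ` {x. a \<bullet> x \<le> 1} = {}" using injD[OF inj] by fastforce
    ultimately have "?U \<inter> closure (f ` {x. a \<bullet> x \<le> 1}) = {}"
      by (simp add: open_Int_closure_eq_empty)
    moreover have "f x \<in> ?U" using \<open>\<not> a \<bullet> x \<le> 1\<close> by auto
    ultimately show False using fx by (auto simp: clH)
  qed
qed

end


context P54 begin

lemma cont_eps: assumes "continuous_on UNIV (g::real \<Rightarrow> real)" "e > 0"
  shows "\<exists>d>0. \<forall>t. dist t x < d \<longrightarrow> dist (g t) (g x) < e"
  using assms unfolding continuous_on_iff by blast

lemma contf: "continuous_on UNIV (\<lambda>t::real. f (t *\<^sub>R a) \<bullet> b)"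
  by (intro continuous_intros continuous_on_compose2[OF cont]) auto

lemma contg: "continuous_on UNIV (\<lambda>t::real. f (x + t *\<^sub>R a) \<bullet> b)"
  by (intro continuous_intros continuous_on_compose2[OF cont]) auto

lemma E: assumes "a \<bullet> x = 1" shows "f a \<bullet> f x = 1"
proof (rule ccontr)
  assume ne: "f a \<bullet> f x \<noteq> 1"
  have le: "f a \<bullet> f x \<le> 1" using R assms by simp
  define e where "e = 1 - f a \<bullet> f x"
  have e: "e > 0" using ne le by (simp add: e_def)
  from cont_eps[OF contf[of a "f x"] e, of 1] obtain d where d: "d > 0"
    "\<And>t. dist t 1 < d \<Longrightarrow> dist (f (t *\<^sub>R a) \<bullet> f x) (f ((1::real) *\<^sub>R a) \<bullet> f x) < e"
    by blast
  define t where "t = 1 + d/2"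
  have "dist t 1 < d" using d(1) by (simp add: t_def dist_real_def)
  from d(2)[OF this] have "f (t *\<^sub>R a) \<bullet> f x < 1" by (simp add: e_def dist_real_def abs_less_iff)
  moreover have "(t *\<^sub>R a) \<bullet> x > 1" using assms d(1) by (simp add: t_def)
  ultimately show False using R[of "t *\<^sub>R a" x] by simp
qed

lemma fnz: "a \<noteq> 0 \<Longrightarrow> f a \<noteq> 0"
  using f0 inj by (metis injD)

lemma RAY: assumes "t \<ge> 0" shows "\<exists>l\<ge>0. f (t *\<^sub>R a) = l *\<^sub>R f a"
proof (cases "t \<le> 1")
  case True
  then have "t *\<^sub>R a \<in> closed_segment 0 a" using assms by (auto simp: closed_segment_def)
  then have "f (t *\<^sub>R a) \<in> closed_segment 0 (f a)" using fseg[of a] by blast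
  then show ?thesis by (auto simp: closed_segment_def)
next
  case False
  show ?thesis
  proof (cases "a = 0")
    case True then show ?thesis by (auto simp: f0)
  next
    case an: False
    have "a = (1/t) *\<^sub>R (t *\<^sub>R a)" using False by simp
    then have "a \<in> closed_segment 0 (t *\<^sub>R a)" using False
      unfolding closed_segment_def by (intro CollectI exI[of _ "1/t"]) simp
    then have "f a \<in> closed_segment 0 (f (t *\<^sub>R a))" using fseg[of "t *\<^sub>R a"] by blast
    then obtain k where k: "0 \<le> k" "f a = k *\<^sub>R f (t *\<^sub>R a)" by (auto simp: closed_segment_def)
    have "k \<noteq> 0" using k fnz[OF an] by auto
    then have "f (t *\<^sub>R a) = (1/k) *\<^sub>R f a" using k by simp
    then show ?thesis using k(1) by (intro exI[of _ "1/k"]) simp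
  qed
qed

lemma unit1: "norm u = 1 \<Longrightarrow> f u \<bullet> f u = 1"
  by (rule E) (simp add: norm_eq_1[symmetric])

lemma Cp: assumes u: "norm u = 1" and c: "x \<bullet> u = c" "c > 0"
  shows "f x \<bullet> f u = f (c *\<^sub>R u) \<bullet> f u"
proof -
  have uu: "u \<bullet> u = 1" using u by (simp add: norm_eq_1[symmetric])
  have "x \<bullet> ((1/c) *\<^sub>R u) = 1" using c by simp
  then have 1: "f x \<bullet> f ((1/c) *\<^sub>R u) = 1" by (rule E)
  have "(c *\<^sub>R u) \<bullet> ((1/c) *\<^sub>R u) = 1" using c uu by simp
  then have 2: "f (c *\<^sub>R u) \<bullet> f ((1/c) *\<^sub>R u) = 1" by (rule E)
  obtain l where l: "f ((1/c) *\<^sub>R u) = l *\<^sub>R f u" using RAY[of "1/c" u] c by auto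
  have "l * (f x \<bullet> f u) = 1" "l * (f (c *\<^sub>R u) \<bullet> f u) = 1" using 1 2 l by simp_all
  then show ?thesis by (metis mult_left_cancel mult_zero_left zero_neq_one)
qed

lemma Hnn: assumes "norm u = 1" "c \<ge> 0" shows "f (c *\<^sub>R u) \<bullet> f u \<ge> 0"
proof -
  obtain l where "l \<ge> 0" "f (c *\<^sub>R u) = l *\<^sub>R f u" using RAY[of c u] assms by auto
  then show ?thesis using unit1[OF assms(1)] by simp
qed

lemma C0: assumes u: "norm u = 1" and x: "x \<bullet> u = 0"
  shows "f x \<bullet> f u = 0"
proof -
  have uu: "u \<bullet> u = 1" using u by (simp add: norm_eq_1[symmetric])
  have ge: "f x \<bullet> f u \<ge> 0"
  proof (rule ccontr)
    assume neg: "\<not> f x \<bullet> f u \<ge> 0"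
    define e where "e = - (f x \<bullet> f u)"
    have e: "e > 0" using neg by (simp add: e_def)
    from cont_eps[OF contg[of x u "f u"] e, of 0] obtain d where d: "d > 0"
      "\<And>t. dist t 0 < d \<Longrightarrow> dist (f (x + t *\<^sub>R u) \<bullet> f u) (f (x + (0::real) *\<^sub>R u) \<bullet> f u) < e"
      by blast
    define t where "t = d/2"
    have "dist t 0 < d" using d(1) by (simp add: t_def dist_real_def)
    from d(2)[OF this] have lt: "f (x + t *\<^sub>R u) \<bullet> f u < 0" by (simp add: e_def dist_real_def abs_less_iff)
    have t0: "t > 0" using d(1) by (simp add: t_def)
    have "(x + t *\<^sub>R u) \<bullet> u = t" using x uu by (simp add: inner_add_left)
    from Cp[OF u this t0] have "f (x + t *\<^sub>R u) \<bullet> f u = f (t *\<^sub>R u) \<bullet> f u" .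
    with Hnn[OF u, of t] t0 lt show False by simp
  qed
  have le: "f x \<bullet> f u \<le> 0"
  proof (rule ccontr)
    assume neg: "\<not> f x \<bullet> f u \<le> 0"
    define dd where "dd = f x \<bullet> f u"
    have dd: "dd > 0" using neg by (simp add: dd_def)
    from cont_at[of 0, unfolded continuous_at_eps_delta] dd obtain d where d: "d > 0"
      "\<And>y. dist y 0 < d \<Longrightarrow> dist (f y) (f 0) < dd" by blast
    define s where "s = d/2"
    have s0: "s > 0" using d(1) by (simp add: s_def)
    have "dist (s *\<^sub>R u) 0 < d" using d(1) u by (simp add: s_def)
    from d(2)[OF this] have nf: "norm (f (s *\<^sub>R u)) < dd" by (simp add: f0)
    obtain nu where nu: "nu \<ge> 0" "f (s *\<^sub>R u) = nu *\<^sub>R f u" using RAY[of s u] s0 by auto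
    have nfu: "norm (f u) = 1" using unit1[OF u] by (simp add: norm_eq_1)
    have nud: "nu < dd" using nf nu nfu by simp
    obtain la where la: "la \<ge> 0" "f ((1/s) *\<^sub>R u) = la *\<^sub>R f u" using RAY[of "1/s" u] s0 by auto
    have "(s *\<^sub>R u) \<bullet> ((1/s) *\<^sub>R u) = 1" using s0 uu by simp
    then have "f (s *\<^sub>R u) \<bullet> f ((1/s) *\<^sub>R u) = 1" by (rule E)
    then have nl: "nu * la = 1" using nu la unit1[OF u] by (simp add: mult.commute)
    have "((1/s) *\<^sub>R u) \<bullet> x \<le> 1" using x by (simp add: inner_commute)
    then have "f ((1/s) *\<^sub>R u) \<bullet> f x \<le> 1" using R by blast
    then have "la * dd \<le> 1" using la by (simp add: dd_def inner_commute)
    moreover have "nu > 0" using nl nu by (metis less_eq_real_def mult_zero_left zero_neq_one)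
    moreover have "la > 0" using nl la by (metis less_eq_real_def mult_zero_right zero_neq_one)
    ultimately have "la * nu < la * dd" using nud by simp
    then show False using nl \<open>la * dd \<le> 1\<close> by (simp add: mult.commute)
  qed
  show ?thesis using ge le by simp
qed

end


lemma additive_id:
  fixes H :: "real \<Rightarrow> real"
  assumes nn: "\<And>c. c \<ge> 0 \<Longrightarrow> H c \<ge> 0" and h1: "H 1 = 1"
    and add: "\<And>x y. x \<ge> 0 \<Longrightarrow> y \<ge> 0 \<Longrightarrow> H (x + y) = H x + H y"
    and c: "c \<ge> 0"
  shows "H c = c"
proof -
  have mono: "H x \<le> H y" if "0 \<le> x" "x \<le> y" for x y
    using add[of x "y - x"] nn[of "y - x"] that by simp
  have mul: "H (real n * x) = real n * H x" if "x \<ge> 0" for n x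
  proof (induction n)
    case 0 show ?case using add[of 0 0] by simp
  next
    case (Suc n)
    have "H (real (Suc n) * x) = H (real n * x + x)" by (simp add: algebra_simps)
    also have "\<dots> = H (real n * x) + H x" using that by (intro add) auto
    finally show ?case using Suc by (simp add: algebra_simps)
  qed
  have nat: "H (real n) = real n" for n using mul[of 1 n] h1 by simp
  have bound: "\<bar>H c - c\<bar> \<le> 1 / real m" if m: "m > 0" for m :: nat
  proof -
    define k where "k = nat \<lfloor>real m * c\<rfloor>"
    have k1: "real k \<le> real m * c" using c by (simp add: k_def)
    have k2: "real m * c \<le> real k + 1" using c by (simp add: k_def)
    have "real k \<le> H (real m * c)" using mono[OF _ k1] nat[of k] by simp
    moreover have "H (real m * c) \<le> real k + 1" using mono[OF _ k2] nat[of "k+1"] c by (simp add: add.commute)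
    ultimately have "\<bar>real m * H c - real m * c\<bar> \<le> 1" using mul[OF c, of m] k1 k2 by simp
    moreover have "\<bar>real m * H c - real m * c\<bar> = real m * \<bar>H c - c\<bar>"
      by (simp add: abs_mult right_diff_distrib[symmetric])
    ultimately have "real m * \<bar>H c - c\<bar> \<le> 1" by simp
    then show ?thesis using m by (simp add: field_simps)
  qed
  show ?thesis
  proof (rule ccontr)
    assume ne: "H c \<noteq> c"
    then have pos: "\<bar>H c - c\<bar> > 0" by simp
    obtain m :: nat where m: "real m > 1 / \<bar>H c - c\<bar>" using reals_Archimedean2 by blast
    then have m0: "m > 0" using pos by (metis gr0I less_numeral_extra(3) of_nat_0 order.asym zero_less_divide_1_iff)
    have "real m * \<bar>H c - c\<bar> > 1" using m pos by (simp add: field_simps)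
    moreover have "\<bar>H c - c\<bar> \<le> 1 / real m" by (rule bound[OF m0])
    ultimately show False using m0 by (simp add: field_simps)
  qed
qed


context P54 begin
lemma prof_eq: assumes u: "norm u = 1" and v: "norm v = 1" and uv: "u \<bullet> v = 0" and g: "g \<ge> 0"
  shows "f (g *\<^sub>R u) \<bullet> f u = f (g *\<^sub>R v) \<bullet> f v"
proof (cases "g = 0")
  case True then show ?thesis by (simp add: f0)
next
  case False
  then have g0: "g > 0" using g by simp
  have uu: "u \<bullet> u = 1" using u by (simp add: norm_eq_1[symmetric])
  have vv: "v \<bullet> v = 1" using v by (simp add: norm_eq_1[symmetric])
  obtain l where l: "f (g *\<^sub>R (u + v)) = l *\<^sub>R f (u + v)" using RAY[of g "u+v"] g by auto
  have vu: "v \<bullet> u = 0" using uv by (simp add: inner_commute)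
  have 2: "(u + v) \<bullet> u = 1" "(u + v) \<bullet> v = 1"
    using uu vv uv vu by (simp_all add: inner_add_left)
  have 1: "(g *\<^sub>R (u + v)) \<bullet> u = g" "(g *\<^sub>R (u + v)) \<bullet> v = g"
    using 2 by simp_all
  have "f (g *\<^sub>R u) \<bullet> f u = l" 
    using Cp[OF u 1(1) g0] Cp[OF u 2(1)] unit1[OF u] l by simp
  moreover have "f (g *\<^sub>R v) \<bullet> f v = l" 
    using Cp[OF v 1(2) g0] Cp[OF v 2(2)] unit1[OF v] l by simp
  ultimately show ?thesis by simp
qed
end

theorem proposition5p4:
  fixes f :: "real^'n \<Rightarrow> real^'n"
  assumes "CARD('n) \<ge> 2"
    and "continuous_on UNIV f"
    and "inj f"
    and "\<forall>A\<in>K0. closure (f ` polar A) = polar (closure (f ` A))"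
  shows "orthogonal_transformation f"
proof -
  interpret P: P54 f using assms(2-4) by unfold_locales
  have "\<not> (\<forall>i j::'n. i = j)"
  proof
    assume h: "\<forall>i j::'n. i = j"
    then have "(UNIV::'n set) = {undefined}" by auto
    then have "CARD('n) = card {undefined::'n}" by (rule arg_cong)
    then have "CARD('n) = 1" by simp
    with assms(1) show False by simp
  qed
  then obtain i0 j0 :: 'n where ij: "i0 \<noteq> j0" by blast
  define e :: "'n \<Rightarrow> real^'n" where "e k = axis k 1" for k
  define F where "F k = f (e k)" for k
  have ne[simp]: "norm (e k) = 1" "norm (- e k) = 1" for k by (simp_all add: e_def)
  have ee: "e i \<bullet> e j = (if i = j then 1 else 0)" for i j by (simp add: e_def inner_axis_axis)
  have FF: "F i \<bullet> F j = (if i = j then 1 else 0)" for i j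
  proof (cases "i = j")
    case True then show ?thesis using P.unit1[OF ne(1)] by (simp add: F_def)
  next
    case False then show ?thesis using P.C0[OF ne(1), of "e i" j] ee by (simp add: F_def)
  qed
  define Q :: "real^'n^'n" where "Q = (\<chi> i j. F j $ i)"
  have QT: "transpose Q *v y = (\<chi> k. F k \<bullet> y)" for y
    by (simp add: vec_eq_iff matrix_vector_mult_def transpose_def Q_def inner_vec_def)
  have Qax: "Q *v axis k c = c *\<^sub>R F k" for k c
    by (simp add: vec_eq_iff matrix_vector_mult_def Q_def axis_def if_distrib cong: if_cong)
  have FF': "(\<Sum>k\<in>UNIV. F i $ k * F j $ k) = (if i = j then 1 else 0)" for i j
    using FF[of i j] by (simp add: inner_vec_def)
  have oQ: "orthogonal_matrix Q"
    unfolding orthogonal_matrix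
    by (simp add: vec_eq_iff matrix_matrix_mult_def transpose_def mat_def Q_def FF')
  have QQT: "Q *v (transpose Q *v y) = y" for y
  proof -
    have "Q *v (transpose Q *v y) = (Q ** transpose Q) *v y" by (rule matrix_vector_mul_assoc)
    also have "\<dots> = y" using oQ by (simp add: orthogonal_matrix_def)
    finally show ?thesis .
  qed
  have otQ: "orthogonal_transformation (\<lambda>x. Q *v x)"
    using oQ by (simp add: orthogonal_transformation_matrix)
  have otQT: "orthogonal_transformation (\<lambda>x. transpose Q *v x)"
    using oQ by (simp only: orthogonal_transformation_matrix matrix_of_matrix_vector_mul
        matrix_vector_mul_linear orthogonal_matrix_transpose simp_thms)
  have iQ: "(Q *v p) \<bullet> (Q *v q) = p \<bullet> q" for p q
    using otQ by (simp add: orthogonal_transformation_def)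
  have iQT: "(transpose Q *v p) \<bullet> (transpose Q *v q) = p \<bullet> q" for p q
    using otQT by (simp add: orthogonal_transformation_def)

  have fneg: "f (- e k) = - F k" for k
  proof -
    define w where "w = f (- e k)"
    define c where "c = F k \<bullet> w"
    have wj: "F j \<bullet> w = 0" if "j \<noteq> k" for j
      using P.C0[OF ne(1), of "- e k" j] ee that by (simp add: F_def w_def inner_commute)
    have v: "transpose Q *v w = c *\<^sub>R axis k 1"
      unfolding QT by (auto simp: vec_eq_iff axis_def c_def wj)
    have ww: "w \<bullet> w = 1" using P.unit1[OF ne(2)] by (simp add: w_def)
    have "c * c = 1" using iQT[of w w] ww v by (simp add: inner_axis_axis)
    then have c: "c = 1 \<or> c = -1" using square_eq_1_iff by blast
    have axc: "c *\<^sub>R axis k (1::real) = axis k c" by (simp add: vec_eq_iff axis_def)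
    have wQ: "w = c *\<^sub>R F k"
    proof -
      have "w = Q *v (transpose Q *v w)" by (rule QQT[symmetric])
      also have "\<dots> = Q *v axis k c" by (simp only: v axc)
      also have "\<dots> = c *\<^sub>R F k" by (rule Qax)
      finally show ?thesis .
    qed
    have "c \<noteq> 1"
    proof
      assume "c = 1"
      then have "f (- e k) = f (e k)" using wQ by (simp add: w_def F_def)
      then have "- e k = e k" using injD[OF assms(3)] by blast
      then have "(- e k) \<bullet> e k = e k \<bullet> e k" by (rule arg_cong)
      then show False using ee[of k k] by simp
    qed
    then show ?thesis using c wQ by (simp add: w_def)
  qed
  define H where "H c = f (c *\<^sub>R e i0) \<bullet> F i0" for c
  have H0: "H 0 = 0" by (simp add: H_def P.f0)
  have H1: "H 1 = 1" using P.unit1[OF ne(1)] by (simp add: H_def F_def)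
  have Hnn: "H c \<ge> 0" if "c \<ge> 0" for c using P.Hnn[OF ne(1) that] by (simp add: H_def F_def)
  have Hp: "f (c *\<^sub>R e k) \<bullet> F k = H c" if "c \<ge> 0" for c k
  proof (cases "k = i0")
    case True then show ?thesis by (simp add: H_def)
  next
    case False then show ?thesis 
      using P.prof_eq[OF ne(1) ne(1) _ that, of k i0] ee by (simp add: H_def F_def)
  qed
  have Hm: "f (c *\<^sub>R (- e k)) \<bullet> f (- e k) = H c" if "c \<ge> 0" for c k
  proof (cases "k = i0")
    case True
    have "f (c *\<^sub>R (- e k)) \<bullet> f (- e k) = f (c *\<^sub>R e j0) \<bullet> f (e j0)"
      using P.prof_eq[OF ne(2) ne(1) _ that, of k j0] ee ij True by simp
    then show ?thesis using Hp[OF that, of j0] by (simp add: F_def)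
  next
    case False then show ?thesis 
      using P.prof_eq[OF ne(2) ne(1) _ that, of k i0] ee by (simp add: H_def F_def)
  qed
  define S where "S c = (if c \<ge> 0 then H c else - H (- c))" for c
  have coord: "f x \<bullet> F k = S (x $ k)" for x k
  proof -
    consider "x $ k > 0" | "x $ k = 0" | "x $ k < 0" by linarith
    then show ?thesis
    proof cases
      case 1
      have "x \<bullet> e k = x $ k" by (simp add: e_def inner_axis)
      from P.Cp[OF ne(1) this 1] show ?thesis using Hp[of "x $ k" k] 1 by (simp add: F_def S_def)
    next
      case 2
      have "x \<bullet> e k = 0" using 2 by (simp add: e_def inner_axis)
      from P.C0[OF ne(1) this] show ?thesis using 2 H0 by (simp add: F_def S_def)
    next
      case 3
      have "x \<bullet> (- e k) = - x $ k" by (simp add: e_def inner_axis)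
      from P.Cp[OF ne(2) this] 3 have "f x \<bullet> f (- e k) = f ((- x $ k) *\<^sub>R (- e k)) \<bullet> f (- e k)" by simp
      then show ?thesis using Hm[of "- x $ k" k] 3 fneg[of k] by (simp add: S_def)
    qed
  qed
  define V :: "real^'n \<Rightarrow> real^'n" where "V x = (\<chi> k. S (x $ k))" for x
  have fV: "f x = Q *v V x" for x
  proof -
    have "transpose Q *v f x = V x" unfolding QT by (simp add: V_def vec_eq_iff coord[symmetric] inner_commute)
    then show ?thesis using QQT[of "f x"] by simp
  qed
  have iV: "f x \<bullet> f y = V x \<bullet> V y" for x y using fV iQ by simp
  have S0: "S 0 = 0" by (simp add: S_def H0)
  have Hadd: "H (g + d) = H g + H d" if g: "g \<ge> 0" and d: "d \<ge> 0" for g d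
  proof (cases "g + d = 0")
    case True then have "g = 0" "d = 0" using g d by linarith+
    then show ?thesis using H0 by simp
  next
    case False
    define s where "s = g + d"
    have s: "s > 0" using False g d by (simp add: s_def)
    define a where "a = (1/s) *\<^sub>R (e i0 + e j0)"
    define x where "x = g *\<^sub>R e i0 + d *\<^sub>R e j0"
    define x' where "x' = s *\<^sub>R e i0"
    have "a \<bullet> x = (1/s) * (g + d)" using ij
      by (simp add: a_def x_def ee inner_add_left inner_add_right) (simp add: add_divide_distrib[symmetric] add.commute)
    then have "a \<bullet> x = 1" using s by (simp add: s_def)
    then have 1: "V a \<bullet> V x = 1" using P.E iV by metis
    have "a \<bullet> x' = 1" using ij s
      by (simp add: a_def x'_def ee inner_add_left inner_add_right)
    then have 2: "V a \<bullet> V x' = 1" using P.E iV by metis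
    have Va: "V a = H (1/s) *\<^sub>R (e i0 + e j0)"
      using ij s S0 by (auto simp: V_def a_def e_def vec_eq_iff axis_def S_def)
    have Vx: "V x = H g *\<^sub>R e i0 + H d *\<^sub>R e j0"
      using ij g d S0 by (auto simp: V_def x_def e_def vec_eq_iff axis_def S_def)
    have Vx': "V x' = H s *\<^sub>R e i0"
      using ij s S0 by (auto simp: V_def x'_def e_def vec_eq_iff axis_def S_def)
    have "H (1/s) * (H g + H d) = 1" using 1 ij
      by (simp add: Va Vx ee inner_add_left inner_add_right algebra_simps)
    moreover have "H (1/s) * H s = 1" using 2 ij
      by (simp add: Va Vx' ee inner_add_left inner_add_right algebra_simps)
    ultimately show ?thesis by (metis mult_left_cancel mult_zero_left zero_neq_one s_def)
  qed
  have Hid: "H c = c" if "c \<ge> 0" for c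
    by (rule additive_id[OF Hnn H1 Hadd that]) auto
  have "S c = c" for c using Hid by (simp add: S_def)
  then have "V x = x" for x by (simp add: V_def vec_eq_iff)
  then have "f = (\<lambda>x. Q *v x)" using fV by auto
  then show ?thesis using otQ by simp
qed

end
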